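(* Let $P$ be a finite poset and let $I\in\mathcal{IC}(P)$ contain all maximal elements of $P$. Then $\mathrm{Row}(I)=P-I$.
   Context: All posets are finite. For a poset $P$, a subset $I\subseteq P$ is interval-closed if for all $x,y\in I$ and $z\in P$ with $x\le z\le y$ we have $z\in I$; $\mathcal{IC}(P)$ is the set of interval-closed subsets of $P$. For $x\in P$ the toggle $t_x:\mathcal{IC}(P)\to\mathcal{IC}(P)$ is defined by $t_x(I)=I\triangle\{x\}$ if $I\triangle\{x\}\in\mathcal{IC}(P)$ and $t_x(I)=I$ otherwise. Rowmotion is $\mathrm{Row}=t_{x_1}\circ t_{x_2}\circ\cdots\circ t_{x_N}:\mathcal{IC}(P)\to\mathcal{IC}(P)$, where $(x_1,\dots,x_N)$ is a linear extension of $P$ (so elements are toggled from the top of the poset down); this does not depend on the choice of linear extension. *)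

theory Defs
  imports Main
begin

definition interval_closed :: "'a::order set \<Rightarrow> 'a set \<Rightarrow> bool" where
  "interval_closed P I \<longleftrightarrow> I \<subseteq> P \<and>
     (\<forall>x\<in>I. \<forall>y\<in>I. \<forall>z\<in>P. x \<le> z \<and> z \<le> y \<longrightarrow> z \<in> I)"

definition IC :: "'a::order set \<Rightarrow> 'a set set" where
  "IC P = {I. interval_closed P I}"

definition toggle :: "'a::order set \<Rightarrow> 'a \<Rightarrow> 'a set \<Rightarrow> 'a set" where
  "toggle P x I = (if interval_closed P ((if x \<in> I then I - {x} else insert x I)) then (if x \<in> I then I - {x} else insert x I) else I)"

definition linear_extension :: "'a::order set \<Rightarrow> 'a list \<Rightarrow> bool" where
  "linear_extension P xs \<longleftrightarrow> distinct xs \<and> set xs = P \<and>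
     (\<forall>i<length xs. \<forall>j<length xs. xs ! i < xs ! j \<longrightarrow> i < j)"

text \<open>Rowmotion w.r.t. the linear extension (x1,...,xN):
  Row = t_{x1} o t_{x2} o ... o t_{xN}, i.e. t_{xN} is applied first.\<close>

definition rowmotion :: "'a::order set \<Rightarrow> 'a list \<Rightarrow> 'a set \<Rightarrow> 'a set" where
  "rowmotion P xs = foldr (\<lambda>x f. toggle P x \<circ> f) xs id"

definition maximal_elements :: "'a::order set \<Rightarrow> 'a set" where
  "maximal_elements P = {x\<in>P. \<not> (\<exists>y\<in>P. x < y)}"

end

theory Submission
  imports Defs
begin

lemma max_above:
  assumes "finite P" "b \<in> P"
  shows "\<exists>m\<in>maximal_elements P. b \<le> m"
proof -
  obtain m where m: "m \<in> P" "b \<le> m" "\<forall>c\<in>P. m \<le> c \<longrightarrow> m = c"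
    using finite_has_maximal2[OF assms] by blast
  hence "m \<in> maximal_elements P" unfolding maximal_elements_def
    using less_le by auto
  thus ?thesis using m by blast
qed

lemma J_ic:
  fixes P :: "'a::order set"
  assumes fin: "finite P" and I: "interval_closed P I"
    and mx: "maximal_elements P \<subseteq> I"
    and SP: "S \<subseteq> P" and up: "\<forall>s\<in>S. \<forall>y\<in>P. s < y \<longrightarrow> y \<in> S"
  shows "interval_closed P ((I - S) \<union> (S - I))"
proof -
  have IP: "I \<subseteq> P" using I interval_closed_def by blast
  have Ic: "\<And>a b z. a \<in> I \<Longrightarrow> b \<in> I \<Longrightarrow> z \<in> P \<Longrightarrow> a \<le> z \<Longrightarrow> z \<le> b \<Longrightarrow> z \<in> I"
    using I unfolding interval_closed_def by blast
  have upl: "\<And>s y. s \<in> S \<Longrightarrow> y \<in> P \<Longrightarrow> s \<le> y \<Longrightarrow> y \<in> S"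
    using up order.order_iff_strict by metis
  show ?thesis unfolding interval_closed_def
  proof (intro conjI ballI impI)
    show "I - S \<union> (S - I) \<subseteq> P" using IP SP by blast
  next
    fix a b z assume a: "a \<in> I - S \<union> (S - I)" and b: "b \<in> I - S \<union> (S - I)"
      and z: "z \<in> P" and az: "a \<le> z \<and> z \<le> b"
    show "z \<in> I - S \<union> (S - I)"
    proof (cases "b \<in> S")
      case False
      hence zS: "z \<notin> S" using upl az b z IP by blast
      hence "a \<notin> S" using upl az z by blast
      hence "a \<in> I" "b \<in> I" using a b False by auto
      hence "z \<in> I" using Ic z az by blast
      thus ?thesis using zS by blast
    next
      case True
      hence bI: "b \<notin> I" "b \<in> P" using b SP by auto
      then obtain m where m: "m \<in> maximal_elements P" "b \<le> m" using max_above fin by blast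
      have mI: "m \<in> I" "m \<in> P" using m mx maximal_elements_def by auto
      have zI: "z \<notin> I"
      proof
        assume "z \<in> I" thus False using Ic[of z m b] mI bI az m by auto
      qed
      have "z \<in> S"
      proof (rule ccontr)
        assume "z \<notin> S"
        hence "a \<notin> S" using upl az z by blast
        hence "a \<in> I" using a by auto
        hence "z \<in> I" using Ic[of a m z] mI az m z by (meson order.trans)
        thus False using zI by blast
      qed
      thus ?thesis using zI by blast
    qed
  qed
qed

lemma main:
  fixes P :: "'a::order set"
  assumes fin: "finite P" and I: "interval_closed P I"
    and mx: "maximal_elements P \<subseteq> I"
  shows "set ys \<subseteq> P \<Longrightarrow> (\<forall>s\<in>set ys. \<forall>y\<in>P. s < y \<longrightarrow> y \<in> set ys) \<Longrightarrow> distinct ys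
    \<Longrightarrow> sorted_wrt (\<lambda>a b. \<not> b < a) ys
    \<Longrightarrow> rowmotion P ys I = (I - set ys) \<union> (set ys - I)"
proof (induction ys)
  case Nil
  then show ?case by (simp add: rowmotion_def)
next
  case (Cons x ys)
  have up: "\<forall>s\<in>set ys. \<forall>y\<in>P. s < y \<longrightarrow> y \<in> set ys"
    using Cons.prems(2,4) by fastforce
  have IH: "rowmotion P ys I = (I - set ys) \<union> (set ys - I)"
    using Cons.IH[OF _ up] Cons.prems by auto
  have r: "rowmotion P (x # ys) I = toggle P x (rowmotion P ys I)"
    by (simp add: rowmotion_def)
  have xS: "x \<notin> set ys" using Cons.prems(3) by simp
  have ic: "interval_closed P ((I - set (x#ys)) \<union> (set (x#ys) - I))"
    by (rule J_ic[OF fin I mx]) (use Cons.prems in auto)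
  have eq: "(if x \<in> (I - set ys) \<union> (set ys - I) then ((I - set ys) \<union> (set ys - I)) - {x}
        else insert x ((I - set ys) \<union> (set ys - I))) = (I - set (x#ys)) \<union> (set (x#ys) - I)"
    using xS by auto
  show ?case unfolding r IH toggle_def eq using ic by simp
qed

theorem lemma2p9:
  fixes P :: "'a::order set" and I :: "'a set" and xs :: "'a list"
  assumes "finite P"
    and "I \<in> IC P"
    and "maximal_elements P \<subseteq> I"
    and "linear_extension P xs"
  shows "rowmotion P xs I = P - I"
proof -
  have I: "interval_closed P I" using assms(2) IC_def by blast
  have IP: "I \<subseteq> P" using I interval_closed_def by blast
  have le: "distinct xs" "set xs = P"
    and o: "\<forall>i<length xs. \<forall>j<length xs. xs ! i < xs ! j \<longrightarrow> i < j"
    using assms(4) unfolding linear_extension_def by auto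
  have s: "sorted_wrt (\<lambda>a b. \<not> b < a) xs"
    unfolding sorted_wrt_iff_nth_less
  proof (intro allI impI notI)
    fix i j assume "i < j" "j < length xs" "xs ! j < xs ! i"
    thus False using o by (meson less_asym order.strict_trans)
  qed
  have "rowmotion P xs I = (I - set xs) \<union> (set xs - I)"
    by (rule main[OF assms(1) I assms(3)]) (use le s in auto)
  thus ?thesis using le IP by auto
qed

end
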